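(* Let $t_1, t_2 \in \mathsf{Topo}$ and let $f$ be an embedding of $t_1$ inside $t_2$. For every $q \in \mathsf{PIFOTree}(t_1)$, if $\mathsf{pop}(q) = (pkt, q')$, then $\mathsf{pop}(\widehat f(q)) = (pkt, \widehat f(q'))$.
   Context: Fix a set $\mathsf{Pkt}$ of packets and a totally ordered set $\mathsf{Rk}$ of ranks (smaller is more favorable). PIFOs: for a set $S$, a PIFO over $S$ is a finite sequence of pairs $(s,r)\in S\times\mathsf{Rk}$ in insertion order; $\mathsf{PIFO}(S)$ is the set of these. $\mathsf{pop}_{\mathsf{PIFO}}(p)$ is undefined if $p$ is empty; otherwise it removes the entry of minimal rank (earliest-inserted among ties) and returns $(s,p')$, its element and the rest. Topologies: $\mathsf{Topo}$ is the smallest set with $*\in\mathsf{Topo}$ and $\mathsf{Node}(\vec t)\in\mathsf{Topo}$ for $n\in\mathbb{N}$, $\vec t\in\mathsf{Topo}^n$. PIFO trees: $\mathsf{Leaf}(p)\in\mathsf{PIFOTree}( * )$ for $p\in\mathsf{PIFO}(\mathsf{Pkt})$; $\mathsf{Internal}(\vec q,p)\in\mathsf{PIFOTree}(\mathsf{Node}(\vec t))$ whenever $\vec t\in\mathsf{Topo}^n$, $p\in\mathsf{PIFO}(\{1,\dots,n\})$, $\vec q[i]\in\mathsf{PIFOTree}(\vec t[i])$. $\vec q[q'/i]$ replaces the $i$-th entry by $q'$. pop (partial): $\mathsf{pop}(\mathsf{Leaf}(p))=(pkt,\mathsf{Leaf}(p'))$ if $\mathsf{pop}_{\mathsf{PIFO}}(p)=(pkt,p')$;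 $\mathsf{pop}(\mathsf{Internal}(\vec q,p))=(pkt,\mathsf{Internal}(\vec q[q'/i],p'))$ if $\mathsf{pop}_{\mathsf{PIFO}}(p)=(i,p')$ and $\mathsf{pop}(\vec q[i])=(pkt,q')$; undefined otherwise. Addresses: $\mathsf{Addr}(t)\subseteq\mathbb{N}^*$ is the smallest set with $\epsilon\in\mathsf{Addr}(t)$ and $i\cdot\alpha\in\mathsf{Addr}(\mathsf{Node}(\vec t))$ for $1\le i\le n$, $\alpha\in\mathsf{Addr}(\vec t[i])$. Subtrees: $t/\epsilon=t$, $\mathsf{Node}(\vec t)/(i\cdot\alpha)=\vec t[i]/\alpha$. An embedding of $t_1$ in $t_2$ is an injective $f:\mathsf{Addr}(t_1)\to\mathsf{Addr}(t_2)$ with $f(\epsilon)=\epsilon$, $t_2/f(\alpha)=*$ whenever $t_1/\alpha=*$, and $\alpha$ a prefix of $\alpha'$ iff $f(\alpha)$ a prefix of $f(\alpha')$. If $t_1=*$ then $t_2=*$; if $t_1=\mathsf{Node}(\vec t_1)$, the map $f_i$ defined by $f(i\cdot\alpha)=f(i)\cdot f_i(\alpha)$ is an embedding of $t_1/i$ in $t_2/f(i)$. Lifting $\widehat f:\mathsf{PIFOTree}(t_1)\to\mathsf{PIFOTree}(t_2)$, by recursion on $t_1$: if $t_1=*$, $\widehat f(q)=q$. If $t_1=\mathsf{Node}(\vec t_1)$ with $n$ children and $q=\mathsf{Internal}(\vec q,p)$, define for each address $\alpha$ of $t_2$ that is a prefix of some $f(i)$ a tree $\widehat f(q)_\alpha\in\mathsf{PIFOTree}(t_2/\alpha)$,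 from longer to shorter $\alpha$: if $\alpha=f(i)$, $\widehat f(q)_\alpha=\widehat{f_i}(\vec q[i])$; otherwise $t_2/\alpha$ has some $m$ children and $\widehat f(q)_\alpha=\mathsf{Internal}(\vec q_\alpha,p_\alpha)$, where $\vec q_\alpha[j]=\widehat f(q)_{\alpha\cdot j}$ if $\alpha\cdot j$ is a prefix of some $f(i)$ and otherwise $\vec q_\alpha[j]$ is the tree of topology $t_2/(\alpha\cdot j)$ with all PIFOs empty; and $p_\alpha$ is obtained from $p$ by replacing each entry $(i,r)$ by $(j,r)$ where $\alpha\cdot j$ is a prefix of $f(i)$, deleting entries for which no such $j$ exists, keeping the order. Finally $\widehat f(q)=\widehat f(q)_\epsilon$. *)

theory Defs
  imports Main "HOL-Library.Sublist"
begin

text \<open>A PIFO over S with ranks in 'rk is a list of (element, rank) pairs in insertion order.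
  Packets are an arbitrary type 'pkt, ranks an arbitrary linear order 'rk.\<close>

type_synonym ('s, 'rk) pifo = "('s \<times> 'rk) list"

definition pifo_pop :: "('s, 'rk::linorder) pifo \<Rightarrow> ('s \<times> ('s, 'rk) pifo) option" where
  "pifo_pop p =
     (if p = [] then None
      else let r = Min (set (map snd p));
               k = (LEAST k. k < length p \<and> snd (p ! k) = r)
           in Some (fst (p ! k), take k p @ drop (Suc k) p))"

lemma size_nth_le: "i < length xs \<Longrightarrow> f (xs ! i) \<le> size_list f xs"
  by (metis nth_mem order_refl size_list_estimation')

lemma size_nth_less_Suc: "i < length xs \<Longrightarrow> f (xs ! i) < Suc (size_list f xs)"
  using size_nth_le[of i xs f] by simp


datatype topo = Star | Node "topo list"

datatype ('pkt, 'rk) ptree =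
    Leaf "('pkt, 'rk) pifo"
  | Internal "('pkt, 'rk) ptree list" "(nat, 'rk) pifo"

text \<open>Membership in PIFOTree(t); children are indexed 1..n.\<close>
fun is_ptree :: "topo \<Rightarrow> ('pkt, 'rk) ptree \<Rightarrow> bool" where
  "is_ptree Star (Leaf p) = True"
| "is_ptree (Node ts) (Internal qs p) =
     (length qs = length ts \<and> (\<forall>(i, r) \<in> set p. 1 \<le> i \<and> i \<le> length ts) \<and>
      list_all2 is_ptree ts qs)"
| "is_ptree _ _ = False"

function (sequential) pop :: "('pkt, 'rk::linorder) ptree \<Rightarrow> ('pkt \<times> ('pkt, 'rk) ptree) option" where
  "pop (Leaf p) = (case pifo_pop p of None \<Rightarrow> None | Some (pkt, p') \<Rightarrow> Some (pkt, Leaf p'))"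
| "pop (Internal qs p) =
     (case pifo_pop p of
        None \<Rightarrow> None
      | Some (i, p') \<Rightarrow>
          (if 1 \<le> i \<and> i \<le> length qs then
             (case pop (qs ! (i - 1)) of
                None \<Rightarrow> None
              | Some (pkt, q') \<Rightarrow> Some (pkt, Internal (qs[i - 1 := q']) p'))
           else None))"
  by pat_completeness auto
termination
  apply (relation "measure size")
   apply simp
  apply clarsimp
  apply (rule le_imp_less_Suc, rule trans_le_add1, rule size_nth_le)
  by simp

function (sequential) addrs :: "topo \<Rightarrow> nat list set" where
  "addrs Star = {[]}"
| "addrs (Node ts) = insert [] (\<Union> (set (map (\<lambda>i. (\<lambda>a. i # a) ` addrs (ts ! (i - 1))) [1..<Suc (length ts)])))"
  by pat_completeness auto
termination
  by (relation "measure size") (auto intro!: size_nth_less_Suc)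

fun subtopo :: "topo \<Rightarrow> nat list \<Rightarrow> topo" where
  "subtopo t [] = t"
| "subtopo (Node ts) (i # a) = (if 1 \<le> i \<and> i \<le> length ts then subtopo (ts ! (i - 1)) a else Star)"
| "subtopo Star (i # a) = Star" \<comment> \<open>never used on valid addresses\<close>

definition embedding :: "(nat list \<Rightarrow> nat list) \<Rightarrow> topo \<Rightarrow> topo \<Rightarrow> bool" where
  "embedding f t1 t2 \<longleftrightarrow>
     f ` addrs t1 \<subseteq> addrs t2 \<and>
     inj_on f (addrs t1) \<and>
     f [] = [] \<and>
     (\<forall>\<alpha> \<in> addrs t1. subtopo t1 \<alpha> = Star \<longrightarrow> subtopo t2 (f \<alpha>) = Star) \<and>
     (\<forall>\<alpha> \<in> addrs t1. \<forall>\<alpha>' \<in> addrs t1. prefix \<alpha> \<alpha>' \<longleftrightarrow> prefix (f \<alpha>) (f \<alpha>'))"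

fun empty_tree :: "topo \<Rightarrow> ('pkt, 'rk) ptree" where
  "empty_tree Star = Leaf []"
| "empty_tree (Node us) = Internal (map empty_tree us) []"

text \<open>The i-th sub-embedding: f(i a) = f(i) f_i(a).\<close>
definition sub_emb :: "(nat list \<Rightarrow> nat list) \<Rightarrow> nat \<Rightarrow> nat list \<Rightarrow> nat list" where
  "sub_emb f i a = drop (length (f [i])) (f (i # a))"

text \<open>p_alpha: relabel entry (i,r) to (j,r) where alpha j is a prefix of f(i), dropping others.\<close>
definition relabel :: "(nat list \<Rightarrow> nat list) \<Rightarrow> nat list \<Rightarrow> (nat, 'rk) pifo \<Rightarrow> (nat, 'rk) pifo" where
  "relabel f \<alpha> p =
     concat (map (\<lambda>(i, r). if strict_prefix \<alpha> (f [i]) then [(f [i] ! length \<alpha>, r)] else []) p)"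

text \<open>build u alpha f n gs p computes the tree hat-f(q)_alpha, where u = t2/alpha, n is the number
  of children of t1, gs ! (i-1) is the already lifted i-th child, and p is the root PIFO of q.\<close>
function (sequential) build ::
  "topo \<Rightarrow> nat list \<Rightarrow> (nat list \<Rightarrow> nat list) \<Rightarrow> nat \<Rightarrow> ('pkt, 'rk) ptree list \<Rightarrow> (nat, 'rk) pifo
   \<Rightarrow> ('pkt, 'rk) ptree" where
  "build u \<alpha> f n gs p =
     (if \<exists>i. 1 \<le> i \<and> i \<le> n \<and> f [i] = \<alpha> then gs ! ((THE i. 1 \<le> i \<and> i \<le> n \<and> f [i] = \<alpha>) - 1)
      else (case u of
              Star \<Rightarrow> Leaf []
            | Node us \<Rightarrow>
                Internal
                  (map (\<lambda>j. if \<exists>i. 1 \<le> i \<and> i \<le> n \<and> prefix (\<alpha> @ [j]) (f [i])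
                             then build (us ! (j - 1)) (\<alpha> @ [j]) f n gs p
                             else empty_tree (us ! (j - 1)))
                       [1..<Suc (length us)])
                  (relabel f \<alpha> p)))"
  by pat_completeness auto
termination
  apply (relation "measure (\<lambda>(u, _). size u)")
   apply simp
  by (auto intro!: size_nth_less_Suc)

function (sequential) lift :: "topo \<Rightarrow> topo \<Rightarrow> (nat list \<Rightarrow> nat list) \<Rightarrow> ('pkt, 'rk) ptree \<Rightarrow> ('pkt, 'rk) ptree" where
  "lift Star t2 f q = q"
| "lift (Node ts) t2 f (Internal qs p) =
     build t2 [] f (length ts)
       (map (\<lambda>i. lift (ts ! (i - 1)) (subtopo t2 (f [i])) (sub_emb f i) (qs ! (i - 1)))
            [1..<Suc (length ts)])
       p"
| "lift (Node ts) t2 f (Leaf p) = Leaf p" \<comment> \<open>ill-typed input, irrelevant\<close>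
  by pat_completeness auto
termination
  by (relation "measure (\<lambda>(t1, _). size t1)") (auto intro!: size_nth_less_Suc)

end

theory Submission
  imports Defs
begin
lemma pifo_pop_char:
  assumes "\<forall>e\<in>set xs. r < snd e" "\<forall>e\<in>set ys. r \<le> snd e"
  shows "pifo_pop (xs @ (x, r) # ys) = Some (x, xs @ ys)"
proof -
  let ?p = "xs @ (x, r) # ys"
  have m: "Min (set (map snd ?p)) = r"
    using assms by (intro Min_eqI) (auto intro: less_imp_le)
  have l: "(LEAST k. k < length ?p \<and> snd (?p ! k) = r) = length xs"
  proof (rule Least_equality)
    show "length xs < length ?p \<and> snd (?p ! length xs) = r" by simp
  next
    fix y assume y: "y < length ?p \<and> snd (?p ! y) = r"
    show "length xs \<le> y"
    proof (rule ccontr)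
      assume "\<not> length xs \<le> y"
      then have "y < length xs" by simp
      then have "?p ! y = xs ! y" by (simp add: nth_append)
      moreover have "xs ! y \<in> set xs" using \<open>y < length xs\<close> by simp
      ultimately show False using y assms(1) by fastforce
    qed
  qed
  show ?thesis unfolding pifo_pop_def using m l by (simp add: Let_def)
qed

lemma pifo_pop_dest:
  assumes "pifo_pop p = Some (x, p')"
  shows "\<exists>xs r ys. p = xs @ (x, r) # ys \<and> p' = xs @ ys \<and> (\<forall>e\<in>set xs. r < snd e) \<and> (\<forall>e\<in>set ys. r \<le> snd e)"
proof -
  have ne: "p \<noteq> []" using assms by (simp add: pifo_pop_def split: if_splits)
  define r where "r = Min (set (map snd p))"
  define k where "k = (LEAST k. k < length p \<and> snd (p ! k) = r)"
  have rin: "r \<in> set (map snd p)" unfolding r_def using ne by (intro Min_in) auto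
  then obtain k0 where k0p: "k0 < length p" "snd (p ! k0) = r" by (auto simp: in_set_conv_nth)
  have kp: "k < length p \<and> snd (p ! k) = r" unfolding k_def by (rule LeastI[of _ k0]) (simp add: k0p)
  have eq: "Some (x, p') = Some (fst (p ! k), take k p @ drop (Suc k) p)"
    using assms ne unfolding pifo_pop_def r_def k_def by (simp add: Let_def)
  have pk: "p ! k = (x, r)" using eq kp by (metis option.inject prod.collapse prod.inject)
  have dec: "p = take k p @ (x, r) # drop (Suc k) p"
    using kp pk by (metis id_take_nth_drop)
  have minle: "\<forall>e\<in>set p. r \<le> snd e" unfolding r_def using ne by auto
  have c1: "\<forall>e\<in>set (take k p). r < snd e"
  proof
    fix e assume "e \<in> set (take k p)"
    then obtain j where j: "j < k" "e = p ! j" using kp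
      by (auto simp: in_set_conv_nth)
    have "\<not> (j < length p \<and> snd (p ! j) = r)" unfolding k_def
      using j(1) k_def not_less_Least by blast
    moreover have "j < length p" using j kp by simp
    moreover have "r \<le> snd e" using minle j \<open>j < length p\<close> by auto
    ultimately show "r < snd e" using j by auto
  qed
  have c2: "\<forall>e\<in>set (drop (Suc k) p). r \<le> snd e" using minle by (meson in_set_dropD)
  show ?thesis using dec eq c1 c2 by blast
qed

lemma relabel_alt:
  "relabel f \<alpha> p = map (\<lambda>(x, r). (f [x] ! length \<alpha>, r)) (filter (\<lambda>(x, r). strict_prefix \<alpha> (f [x])) p)"
  unfolding relabel_def by (induction p) auto

lemma relabel_pop:
  assumes "pifo_pop p = Some (x, p')" "strict_prefix \<alpha> (f [x])"
  shows "pifo_pop (relabel f \<alpha> p) = Some (f [x] ! length \<alpha>, relabel f \<alpha> p')"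
proof -
  obtain xs r ys where d: "p = xs @ (x, r) # ys" "p' = xs @ ys" "\<forall>e\<in>set xs. r < snd e" "\<forall>e\<in>set ys. r \<le> snd e"
    using pifo_pop_dest[OF assms(1)] by blast
  let ?P = "(\<lambda>(x, r). strict_prefix \<alpha> (f [x]))"
  let ?h = "(\<lambda>(x, r). (f [x] ! length \<alpha>, r))"
  have "pifo_pop (map ?h (filter ?P xs) @ (f [x] ! length \<alpha>, r) # map ?h (filter ?P ys))
      = Some (f [x] ! length \<alpha>, map ?h (filter ?P xs) @ map ?h (filter ?P ys))"
    using d by (intro pifo_pop_char) auto
  then show ?thesis using d assms(2) by (simp add: relabel_alt)
qed

lemma relabel_frame:
  assumes "pifo_pop p = Some (x, p')" "\<not> strict_prefix \<alpha> (f [x])"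
  shows "relabel f \<alpha> p' = relabel f \<alpha> p"
proof -
  obtain xs r ys where d: "p = xs @ (x, r) # ys" "p' = xs @ ys"
    using pifo_pop_dest[OF assms(1)] by blast
  then show ?thesis using assms(2) by (simp add: relabel_alt)
qed

lemma addrs_Cons: "(i # a \<in> addrs t) \<longleftrightarrow> (\<exists>ts. t = Node ts \<and> 1 \<le> i \<and> i \<le> length ts \<and> a \<in> addrs (ts ! (i - 1)))"
  by (cases t) (auto simp: less_Suc_eq_le)

lemma addrs_Nil[simp]: "[] \<in> addrs t"
  by (cases t) auto

lemma subtopo_Star[simp]: "subtopo Star b = Star"
  by (cases b) auto

lemma subtopo_append: "subtopo t (a @ b) = subtopo (subtopo t a) b"
proof (induction t a rule: subtopo.induct)
  case (3 i a)
  then show ?case by (cases b) auto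
qed auto

lemma addrs_append: "(a @ b \<in> addrs t) \<longleftrightarrow> (a \<in> addrs t \<and> b \<in> addrs (subtopo t a))"
proof (induction a arbitrary: t)
  case Nil then show ?case by simp
next
  case (Cons i a)
  show ?case by (auto simp: addrs_Cons Cons.IH)
qed

lemma strict_node:
  assumes "\<alpha> @ j # c \<in> addrs t"
  shows "\<exists>us. subtopo t \<alpha> = Node us \<and> 1 \<le> j \<and> j \<le> length us \<and> subtopo t (\<alpha> @ [j]) = us ! (j - 1)"
proof -
  have "j # c \<in> addrs (subtopo t \<alpha>)" using assms addrs_append by blast
  then obtain us where "subtopo t \<alpha> = Node us" "1 \<le> j" "j \<le> length us" by (auto simp: addrs_Cons)
  then show ?thesis by (simp add: subtopo_append)
qed

lemma emb_fact:
  assumes emb: "embedding f (Node ts) t2" and i: "1 \<le> i" "i \<le> length ts"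
    and a: "a \<in> addrs (ts ! (i - 1))"
  shows "f (i # a) = f [i] @ sub_emb f i a" "f (i # a) \<in> addrs t2"
proof -
  have m: "i # a \<in> addrs (Node ts)" "[i] \<in> addrs (Node ts)" unfolding addrs_Cons using i a by auto
  have "\<forall>\<alpha> \<in> addrs (Node ts). \<forall>\<alpha>' \<in> addrs (Node ts). prefix \<alpha> \<alpha>' \<longleftrightarrow> prefix (f \<alpha>) (f \<alpha>')"
    using emb unfolding embedding_def by blast
  moreover have "prefix [i] (i # a)" by simp
  ultimately have "prefix (f [i]) (f (i # a))" using m by blast
  then show "f (i # a) = f [i] @ sub_emb f i a" unfolding sub_emb_def prefix_def by auto
  have "f ` addrs (Node ts) \<subseteq> addrs t2" using emb unfolding embedding_def by blast
  then show "f (i # a) \<in> addrs t2" using m by blast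
qed

lemma emb_sub:
  assumes emb: "embedding f (Node ts) t2" and i: "1 \<le> i" "i \<le> length ts"
  shows "embedding (sub_emb f i) (ts ! (i - 1)) (subtopo t2 (f [i]))"
proof -
  note ef = emb_fact[OF emb i]
  have fi: "f [i] \<in> addrs t2" using ef(2)[of "[]"] by simp
  have m: "\<And>a. a \<in> addrs (ts ! (i - 1)) \<Longrightarrow> i # a \<in> addrs (Node ts)" unfolding addrs_Cons using i by auto
  have E: "f ` addrs (Node ts) \<subseteq> addrs t2" "inj_on f (addrs (Node ts))" "f [] = []"
    "\<forall>\<alpha> \<in> addrs (Node ts). subtopo (Node ts) \<alpha> = Star \<longrightarrow> subtopo t2 (f \<alpha>) = Star"
    "\<forall>\<alpha> \<in> addrs (Node ts). \<forall>\<alpha>' \<in> addrs (Node ts). prefix \<alpha> \<alpha>' \<longleftrightarrow> prefix (f \<alpha>) (f \<alpha>')"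
    using emb unfolding embedding_def by blast+
  show ?thesis unfolding embedding_def
  proof (intro conjI ballI subsetI impI)
    fix x assume "x \<in> sub_emb f i ` addrs (ts ! (i - 1))"
    then obtain a where a: "a \<in> addrs (ts ! (i - 1))" "x = sub_emb f i a" by auto
    then have "f [i] @ x \<in> addrs t2" using ef(1)[OF a(1)] ef(2)[OF a(1)] by simp
    then show "x \<in> addrs (subtopo t2 (f [i]))" using addrs_append by blast
  next
    show "inj_on (sub_emb f i) (addrs (ts ! (i - 1)))"
    proof (rule inj_onI)
      fix a b assume a: "a \<in> addrs (ts ! (i - 1))" and b: "b \<in> addrs (ts ! (i - 1))"
        and eq: "sub_emb f i a = sub_emb f i b"
      have "f (i # a) = f (i # b)" using ef(1)[OF a] ef(1)[OF b] eq by simp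
      then have "i # a = i # b" using inj_onD[OF E(2) _ m[OF a] m[OF b]] by simp
      then show "a = b" by simp
    qed
  next
    show "sub_emb f i [] = []" unfolding sub_emb_def by simp
  next
    fix a assume a: "a \<in> addrs (ts ! (i - 1))" and st: "subtopo (ts ! (i - 1)) a = Star"
    have "subtopo (Node ts) (i # a) = Star" using st i by simp
    then have "subtopo t2 (f (i # a)) = Star" using E(4) m[OF a] by blast
    then show "subtopo (subtopo t2 (f [i])) (sub_emb f i a) = Star"
      using ef(1)[OF a] by (simp add: subtopo_append)
  next
    fix a b assume a: "a \<in> addrs (ts ! (i - 1))" and b: "b \<in> addrs (ts ! (i - 1))"
    have "prefix a b \<longleftrightarrow> prefix (i # a) (i # b)" by simp
    also have "\<dots> \<longleftrightarrow> prefix (f (i # a)) (f (i # b))" using E(5) m[OF a] m[OF b] by blast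
    also have "\<dots> \<longleftrightarrow> prefix (sub_emb f i a) (sub_emb f i b)"
      using ef(1)[OF a] ef(1)[OF b] by simp
    finally show "prefix a b \<longleftrightarrow> prefix (sub_emb f i a) (sub_emb f i b)" .
  qed
qed

declare build.simps[simp del] upt_Suc[simp del]
lemma build_hit:
  assumes "1 \<le> j" "j \<le> n" "f [j] = \<alpha>" "\<And>j'. 1 \<le> j' \<Longrightarrow> j' \<le> n \<Longrightarrow> f [j'] = \<alpha> \<Longrightarrow> j' = j"
  shows "build u \<alpha> f n gs p = gs ! (j - 1)"
proof -
  have ex: "\<exists>i. 1 \<le> i \<and> i \<le> n \<and> f [i] = \<alpha>" using assms(1-3) by blast
  have th: "(THE i. 1 \<le> i \<and> i \<le> n \<and> f [i] = \<alpha>) = j"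
  proof (rule the_equality)
    show "1 \<le> j \<and> j \<le> n \<and> f [j] = \<alpha>" using assms(1-3) by simp
    fix x assume "1 \<le> x \<and> x \<le> n \<and> f [x] = \<alpha>"
    then show "x = j" using assms(4) by simp
  qed
  show ?thesis by (subst build.simps) (simp only: ex th if_True)
qed

lemma build_miss:
  assumes "\<not> (\<exists>i. 1 \<le> i \<and> i \<le> n \<and> f [i] = \<alpha>)"
  shows "build (Node us) \<alpha> f n gs p =
     Internal (map (\<lambda>j. if \<exists>i. 1 \<le> i \<and> i \<le> n \<and> prefix (\<alpha> @ [j]) (f [i])
                             then build (us ! (j - 1)) (\<alpha> @ [j]) f n gs p
                             else empty_tree (us ! (j - 1)))
                       [1..<Suc (length us)]) (relabel f \<alpha> p)"
  by (subst build.simps) (simp only: assms if_False topo.case)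

lemma build_miss_Star:
  assumes "\<not> (\<exists>i. 1 \<le> i \<and> i \<le> n \<and> f [i] = \<alpha>)"
  shows "build Star \<alpha> f n gs p = Leaf []"
  by (subst build.simps) (simp only: assms if_False topo.case)

lemma build_ex:
  assumes "\<exists>j. 1 \<le> j \<and> j \<le> n \<and> f [j] = \<beta>"
  shows "build u \<beta> f n gs p = gs ! ((THE j. 1 \<le> j \<and> j \<le> n \<and> f [j] = \<beta>) - 1)"
  by (subst build.simps) (simp only: assms if_True)

lemma build_ex_frame:
  fixes gs :: "('pkt, 'rk) ptree list"
  assumes ex: "\<exists>j. 1 \<le> j \<and> j \<le> n \<and> f [j] = \<beta>" and ne: "f [i] \<noteq> \<beta>" and i: "1 \<le> i"
    and inj: "inj_on (\<lambda>j. f [j]) {1..n}"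
  shows "build u \<beta> f n (gs[i - 1 := g']) p' = build u \<beta> f n gs p"
proof -
  define J where "J = (THE j. 1 \<le> j \<and> j \<le> n \<and> f [j] = \<beta>)"
  obtain j0 where j0: "1 \<le> j0" "j0 \<le> n" "f [j0] = \<beta>" using ex by blast
  have u: "y = j0" if "1 \<le> y \<and> y \<le> n \<and> f [y] = \<beta>" for y
  proof -
    have "f [y] = f [j0]" using that j0 by simp
    moreover have "y \<in> {1..n}" "j0 \<in> {1..n}" using that j0 by simp_all
    ultimately show ?thesis using inj_onD[OF inj] by blast
  qed
  have "J = j0" unfolding J_def
  proof (rule the_equality)
    show "1 \<le> j0 \<and> j0 \<le> n \<and> f [j0] = \<beta>" using j0 by simp
  qed (rule u)
  then have "J \<noteq> i" using j0 ne by blast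
  then have ne2: "J - 1 \<noteq> i - 1" using j0 i \<open>J = j0\<close> by linarith
  have bb: "build u \<beta> f n G P = G ! (J - 1)" for G :: "('pkt, 'rk) ptree list" and P :: "(nat, 'rk) pifo"
    unfolding J_def by (rule build_ex[OF ex])
  show ?thesis unfolding bb using ne2 by simp
qed

lemma build_frame:
  assumes pp: "pifo_pop p = Some (i, p')" and i: "1 \<le> i"
    and inj: "inj_on (\<lambda>j. f [j]) {1..n}"
  shows "\<not> prefix \<beta> (f [i]) \<Longrightarrow> \<not> prefix (f [i]) \<beta> \<Longrightarrow>
    build u \<beta> f n (gs[i - 1 := g']) p' = build u \<beta> f n gs p"
proof (induction u arbitrary: \<beta>)
  case Star
  show ?case
  proof (cases "\<exists>j. 1 \<le> j \<and> j \<le> n \<and> f [j] = \<beta>")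
    case True
    show ?thesis by (rule build_ex_frame[OF True]) (use Star.prems i inj in auto)
  next
    case False
    show ?thesis by (simp only: build_miss_Star[OF False])
  qed
next
  case (Node us)
  show ?case
  proof (cases "\<exists>j. 1 \<le> j \<and> j \<le> n \<and> f [j] = \<beta>")
    case True
    show ?thesis by (rule build_ex_frame[OF True]) (use Node.prems i inj in auto)
  next
    case False
    have rl: "relabel f \<beta> p' = relabel f \<beta> p"
      using relabel_frame[OF pp] Node.prems by (auto simp: strict_prefix_def)
    have ch: "build (us ! (j - 1)) (\<beta> @ [j]) f n (gs[i - 1 := g']) p' = build (us ! (j - 1)) (\<beta> @ [j]) f n gs p"
      if "j \<in> set [1..<Suc (length us)]" for j
    proof (rule Node.IH)
      show "us ! (j - 1) \<in> set us" using that by auto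
      show "\<not> prefix (\<beta> @ [j]) (f [i])" using Node.prems(1) prefix_order.trans[of \<beta> "\<beta> @ [j]" "f [i]"] by auto
      show "\<not> prefix (f [i]) (\<beta> @ [j])" using Node.prems by (auto simp: prefix_snoc)
    qed
    show ?thesis unfolding build_miss[OF False] rl
      using ch by (auto intro!: map_cong)
  qed
qed

declare build.simps[simp del] upt_Suc[simp del]
lemma build_pop:
  fixes gs :: "('pkt, 'rk::linorder) ptree list"
  assumes pp: "pifo_pop p = Some (i, p')" and i: "1 \<le> i" "i \<le> n" and len: "length gs = n"
    and pg: "pop (gs ! (i - 1)) = Some (pkt, g')" and fi: "f [i] \<in> addrs t2"
    and inj: "inj_on (\<lambda>j. f [j]) {1..n}"
    and uniq: "\<And>j. 1 \<le> j \<Longrightarrow> j \<le> n \<Longrightarrow> prefix (f [j]) (f [i]) \<Longrightarrow> j = i"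
  shows "prefix \<alpha> (f [i]) \<Longrightarrow>
    pop (build (subtopo t2 \<alpha>) \<alpha> f n gs p) = Some (pkt, build (subtopo t2 \<alpha>) \<alpha> f n (gs[i - 1 := g']) p')"
proof (induction "length (f [i]) - length \<alpha>" arbitrary: \<alpha> rule: less_induct)
  case less
  show ?case
  proof (cases "\<alpha> = f [i]")
    case True
    have h: "build u \<alpha> f n G P = G ! (i - 1)" for u and G :: "('pkt, 'rk) ptree list" and P :: "(nat, 'rk) pifo"
      using True i uniq by (intro build_hit) auto
    show ?thesis unfolding h using pg i len by simp
  next
    case False
    obtain zs where zs: "f [i] = \<alpha> @ zs" using less.prems by (auto simp: prefix_def)
    then have "zs \<noteq> []" using False by auto
    then obtain jj c where fic: "f [i] = \<alpha> @ jj # c" using zs by (cases zs) auto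
    obtain us where us: "subtopo t2 \<alpha> = Node us" "1 \<le> jj" "jj \<le> length us"
      "subtopo t2 (\<alpha> @ [jj]) = us ! (jj - 1)"
      using strict_node[of \<alpha> jj c t2] fi fic by auto
    have nex: "\<not> (\<exists>j. 1 \<le> j \<and> j \<le> n \<and> f [j] = \<alpha>)"
    proof
      assume "\<exists>j. 1 \<le> j \<and> j \<le> n \<and> f [j] = \<alpha>"
      then obtain j where j: "1 \<le> j" "j \<le> n" "f [j] = \<alpha>" by blast
      then have "j = i" using uniq less.prems by auto
      then show False using j False by simp
    qed
    have sp: "strict_prefix \<alpha> (f [i])" using less.prems False by (simp add: strict_prefix_def)
    have jj: "f [i] ! length \<alpha> = jj" using fic by simp
    have rp: "pifo_pop (relabel f \<alpha> p) = Some (jj, relabel f \<alpha> p')"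
      using relabel_pop[of p i p' \<alpha> f, OF pp sp] jj by simp
    have pre: "prefix (\<alpha> @ [jj]) (f [i])" using fic by simp
    have exj: "\<exists>i'. 1 \<le> i' \<and> i' \<le> n \<and> prefix (\<alpha> @ [jj]) (f [i'])" using pre i by blast
    have IH: "pop (build (us ! (jj - 1)) (\<alpha> @ [jj]) f n gs p) =
       Some (pkt, build (us ! (jj - 1)) (\<alpha> @ [jj]) f n (gs[i - 1 := g']) p')"
      using less.hyps[of "\<alpha> @ [jj]"] pre fic us(4) by simp
    define F where "F = (\<lambda>(G::('pkt, 'rk) ptree list) (P::(nat, 'rk) pifo) j. if \<exists>i. 1 \<le> i \<and> i \<le> n \<and> prefix (\<alpha> @ [j]) (f [i])
                             then build (us ! (j - 1)) (\<alpha> @ [j]) f n G P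
                             else empty_tree (us ! (j - 1)))"
    have b1: "build (subtopo t2 \<alpha>) \<alpha> f n gs p = Internal (map (F gs p) [1..<Suc (length us)]) (relabel f \<alpha> p)"
      unfolding us(1) build_miss[OF nex] F_def by simp
    have b2: "build (subtopo t2 \<alpha>) \<alpha> f n (gs[i - 1 := g']) p' =
       Internal (map (F (gs[i - 1 := g']) p') [1..<Suc (length us)]) (relabel f \<alpha> p')"
      unfolding us(1) build_miss[OF nex] F_def by simp
    have Fjj: "F gs p jj = build (us ! (jj - 1)) (\<alpha> @ [jj]) f n gs p"
      "F (gs[i - 1 := g']) p' jj = build (us ! (jj - 1)) (\<alpha> @ [jj]) f n (gs[i - 1 := g']) p'"
      unfolding F_def using exj by simp_all
    have Foth: "F (gs[i - 1 := g']) p' j = F gs p j" if "j \<noteq> jj" for j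
    proof -
      have "\<not> prefix (\<alpha> @ [j]) (f [i])" using fic that by simp
      moreover have "\<not> prefix (f [i]) (\<alpha> @ [j])" using fic that by (auto simp: prefix_snoc)
      ultimately have "build (us ! (j - 1)) (\<alpha> @ [j]) f n (gs[i - 1 := g']) p' = build (us ! (j - 1)) (\<alpha> @ [j]) f n gs p"
        by (rule build_frame[OF pp i(1) inj])
      then show ?thesis unfolding F_def by auto
    qed
    have L: "(map (F gs p) [1..<Suc (length us)])[jj - 1 := F (gs[i - 1 := g']) p' jj]
        = map (F (gs[i - 1 := g']) p') [1..<Suc (length us)]"
    proof (rule nth_equalityI)
      fix k assume "k < length ((map (F gs p) [1..<Suc (length us)])[jj - 1 := F (gs[i - 1 := g']) p' jj])"
      then have k: "k < length us" by simp
      show "(map (F gs p) [1..<Suc (length us)])[jj - 1 := F (gs[i - 1 := g']) p' jj] ! k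
          = map (F (gs[i - 1 := g']) p') [1..<Suc (length us)] ! k"
      proof (cases "k = jj - 1")
        case True
        then show ?thesis using k us(2) by simp
      next
        case False
        then have "Suc k \<noteq> jj" using us(2) by auto
        then show ?thesis using k False Foth by (simp add: nth_list_update_neq)
      qed
    qed simp
    show ?thesis unfolding b1 b2 using rp us(2,3) IH Fjj L by simp
  qed
qed

declare upt_Suc[simp del]

lemma main:
  fixes q q' :: "('pkt, 'rk::linorder) ptree"
  shows "embedding f t1 t2 \<Longrightarrow> is_ptree t1 q \<Longrightarrow> pop q = Some (pkt, q') \<Longrightarrow>
   pop (lift t1 t2 f q) = Some (pkt, lift t1 t2 f q')"
proof (induction t1 t2 f q arbitrary: pkt q' rule: lift.induct)
  case (1 t2 f q)
  then show ?case by simp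
next
  case (2 ts t2 f qs p)
  let ?n = "length ts"
  obtain i p' where pp: "pifo_pop p = Some (i, p')"
    using 2(4) by (auto split: option.splits)
  have i: "1 \<le> i" "i \<le> length qs" and lq: "length qs = ?n"
    using 2(3,4) pp by (auto split: option.splits if_splits)
  obtain c' where pc: "pop (qs ! (i - 1)) = Some (pkt, c')" and q': "q' = Internal (qs[i - 1 := c']) p'"
    using 2(4) pp i by (auto split: option.splits if_splits)
  define G where "G = (\<lambda>(Q::('pkt, 'rk) ptree list) i. lift (ts ! (i - 1)) (subtopo t2 (f [i])) (sub_emb f i) (Q ! (i - 1)))"
  let ?gs = "map (G qs) [1..<Suc ?n]"
  have embi: "embedding (sub_emb f i) (ts ! (i - 1)) (subtopo t2 (f [i]))"
    using emb_sub[OF 2(2)] i lq by simp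
  have isp: "is_ptree (ts ! (i - 1)) (qs ! (i - 1))"
    using 2(3) i lq by (auto simp: list_all2_conv_all_nth)
  have IH: "pop (G qs i) = Some (pkt, G (qs[i - 1 := c']) i)"
  proof -
    have "i \<in> set [1..<Suc ?n]" using i lq by (simp del: upt_Suc)
    then show ?thesis unfolding G_def using 2(1)[OF _ embi isp pc] i lq by (simp del: upt_Suc)
  qed
  have gsi: "?gs ! (i - 1) = G qs i" using i lq by (simp del: upt_Suc)
  have gs': "map (G (qs[i - 1 := c'])) [1..<Suc ?n] = ?gs[i - 1 := G (qs[i - 1 := c']) i]"
  proof (rule nth_equalityI)
    fix k assume "k < length (map (G (qs[i - 1 := c'])) [1..<Suc ?n])"
    then have k: "k < ?n" by simp
    show "map (G (qs[i - 1 := c'])) [1..<Suc ?n] ! k = (?gs[i - 1 := G (qs[i - 1 := c']) i]) ! k"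
    proof (cases "k = i - 1")
      case True then show ?thesis using k i by (simp del: upt_Suc)
    next
      case False then show ?thesis using k i lq unfolding G_def by (simp del: upt_Suc)
    qed
  qed simp
  have E: "f ` addrs (Node ts) \<subseteq> addrs t2" "inj_on f (addrs (Node ts))"
    "\<forall>\<alpha> \<in> addrs (Node ts). \<forall>\<alpha>' \<in> addrs (Node ts). prefix \<alpha> \<alpha>' \<longleftrightarrow> prefix (f \<alpha>) (f \<alpha>')"
    using 2(2) unfolding embedding_def by blast+
  have mem: "[j] \<in> addrs (Node ts)" if "1 \<le> j" "j \<le> ?n" for j
    unfolding addrs_Cons using that by auto
  have mi: "[i] \<in> addrs (Node ts)" using mem[of i] i lq by simp
  have fi: "f [i] \<in> addrs t2" using E(1) mi by blast
  have inj: "inj_on (\<lambda>j. f [j]) {1..?n}"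
  proof (rule inj_onI)
    fix a b assume a: "a \<in> {1..?n}" and b: "b \<in> {1..?n}" and e: "f [a] = f [b]"
    have "[a] = [b]" using inj_onD[OF E(2) e] mem a b by simp
    then show "a = b" by simp
  qed
  have uniq: "j = i" if "1 \<le> j" "j \<le> ?n" "prefix (f [j]) (f [i])" for j
  proof -
    have mj: "[j] \<in> addrs (Node ts)" using mem that by simp
    have "prefix [j] [i]" using E(3) mj mi that(3) by blast
    then show ?thesis by simp
  qed
  have bp: "pop (build (subtopo t2 []) [] f ?n ?gs p) =
    Some (pkt, build (subtopo t2 []) [] f ?n (?gs[i - 1 := G (qs[i - 1 := c']) i]) p')"
    by (rule build_pop[OF pp i(1) _ _ _ fi inj uniq]) (use i lq gsi IH in auto)
  have l1: "lift (Node ts) t2 f (Internal qs p) = build t2 [] f ?n ?gs p" unfolding G_def by simp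
  have l2: "lift (Node ts) t2 f q' = build t2 [] f ?n (map (G (qs[i - 1 := c'])) [1..<Suc ?n]) p'"
    unfolding q' G_def by simp
  show ?case unfolding l1 l2 gs' using bp by simp
next
  case (3 ts t2 f p)
  then show ?case by simp
qed

theorem lemma5p7:
  fixes t1 t2 :: topo
    and f :: "nat list \<Rightarrow> nat list"
    and q q' :: "('pkt, 'rk::linorder) ptree"
    and pkt :: 'pkt
  assumes "embedding f t1 t2"
    and "is_ptree t1 q"
    and "pop q = Some (pkt, q')"
  shows "pop (lift t1 t2 f q) = Some (pkt, lift t1 t2 f q')"
  by (rule main[OF assms])

end
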